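(* Let $p\in[1,\infty)$, $w$ a weight sequence, and let $A\subset L_{p,w}$ be bounded in $\|\cdot\|_{p,w}$ and equinormed with respect to $\{\|\cdot\|_{p,w,i}\}_{i\in\mathbb{N}}$. Then $$\forall\varepsilon>0\ \exists N\in\mathbb{N}\ \forall a\in A\ \forall i\ge N:\ \sum_{j=i+1}^\infty|a_{\sigma^a_j}|^p w_j<\varepsilon.$$
   Context: A weight sequence is a sequence $w=(w_i)$ of positive reals with $w_1=1\ge w_2\ge\dots$, $w_i\to0$, and $\sum_i w_i=+\infty$. For a real sequence $a$, $\|a\|_{p,w}=\sup_{\sigma}\big(\sum_{i=1}^\infty |a_{\sigma_i}|^p w_i\big)^{1/p}$ over all permutations $\sigma$ of $\mathbb{N}$; $L_{p,w}$ is the set of real sequences with finite norm. $\|a\|_{p,w,i}=\|(a_1,\dots,a_i,0,0,\dots)\|_{p,w}$. $A$ is equinormed if $\forall\varepsilon>0\ \exists i\ \forall a\in A:\ \|a\|_{p,w}\le\|a\|_{p,w,i}+\varepsilon$. For $a\in L_{p,w}$, $\sigma^a:\mathbb{N}\to\mathbb{N}$ is defined recursively: $\sigma^a_i$ is the element $j$ of $\mathbb{N}\setminus\{\sigma^a_1,\dots,\sigma^a_{i-1}\}$ with $|a_j|$ maximal, taking the smallest such index in case of ties (well defined for $a\in L_{p,w}$; $|a_{\sigma^a_i}|$ is nonincreasing). *)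

theory Defs
  imports "HOL-Analysis.Analysis"
begin

text \<open>Sequences are indexed by nat starting at 0 (paper index i corresponds to i-1 here).\<close>

definition weight_seq :: "(nat \<Rightarrow> real) \<Rightarrow> bool" where
  "weight_seq w \<longleftrightarrow> (\<forall>i. w i > 0) \<and> w 0 = 1 \<and> decseq w \<and> w \<longlonglongrightarrow> 0
     \<and> \<not> summable w"

definition perm_sum :: "real \<Rightarrow> (nat \<Rightarrow> real) \<Rightarrow> (nat \<Rightarrow> real) \<Rightarrow> (nat \<Rightarrow> nat) \<Rightarrow> real" where
  "perm_sum p w a \<sigma> = (\<Sum>i. \<bar>a (\<sigma> i)\<bar> powr p * w i)"

definition Lpw :: "real \<Rightarrow> (nat \<Rightarrow> real) \<Rightarrow> (nat \<Rightarrow> real) set" where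
  "Lpw p w = {a. (\<forall>\<sigma>. bij \<sigma> \<longrightarrow> summable (\<lambda>i. \<bar>a (\<sigma> i)\<bar> powr p * w i))
      \<and> (\<exists>B. \<forall>\<sigma>. bij \<sigma> \<longrightarrow> perm_sum p w a \<sigma> \<le> B)}"

definition pw_norm :: "real \<Rightarrow> (nat \<Rightarrow> real) \<Rightarrow> (nat \<Rightarrow> real) \<Rightarrow> real" where
  "pw_norm p w a = (SUP \<sigma>\<in>{\<sigma>. bij \<sigma>}. perm_sum p w a \<sigma>) powr (1 / p)"

definition trunc_seq :: "nat \<Rightarrow> (nat \<Rightarrow> real) \<Rightarrow> (nat \<Rightarrow> real)" where
  "trunc_seq i a = (\<lambda>j. if j < i then a j else 0)"

definition pw_norm_i :: "real \<Rightarrow> (nat \<Rightarrow> real) \<Rightarrow> nat \<Rightarrow> (nat \<Rightarrow> real) \<Rightarrow> real" where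
  "pw_norm_i p w i a = pw_norm p w (trunc_seq i a)"

definition equinormed :: "real \<Rightarrow> (nat \<Rightarrow> real) \<Rightarrow> (nat \<Rightarrow> real) set \<Rightarrow> bool" where
  "equinormed p w A \<longleftrightarrow>
     (\<forall>\<epsilon>>0. \<exists>i. \<forall>a\<in>A. pw_norm p w a \<le> pw_norm_i p w i a + \<epsilon>)"

text \<open>The decreasing rearrangement sigma^a: the list of its first n values.\<close>
primrec sigma_list :: "(nat \<Rightarrow> real) \<Rightarrow> nat \<Rightarrow> nat list" where
  "sigma_list a 0 = []"
| "sigma_list a (Suc n) = sigma_list a n @
     [LEAST j. j \<notin> set (sigma_list a n) \<and>
        (\<forall>k. k \<notin> set (sigma_list a n) \<longrightarrow> \<bar>a k\<bar> \<le> \<bar>a j\<bar>)]"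

definition sigma_seq :: "(nat \<Rightarrow> real) \<Rightarrow> nat \<Rightarrow> nat" where
  "sigma_seq a i = sigma_list a (Suc i) ! i"

end

theory Submission
  imports Defs
begin


lemma extend_bij:
  fixes f :: "nat \<Rightarrow> nat"
  assumes inj: "inj_on f {..<n}"
  shows "\<exists>\<pi>. bij \<pi> \<and> (\<forall>j<n. \<pi> j = f j)"
proof -
  define F where "F = f ` {..<n}"
  define R where "R = - F"
  have "finite F" unfolding F_def by simp
  hence infR: "infinite R" unfolding R_def
    by (simp add: Diff_infinite_finite Compl_eq_Diff_UNIV)
  define e where "e = enumerate R"
  have be: "bij_betw e UNIV R" unfolding e_def using bij_enumerate[OF infR] .
  define \<pi> where "\<pi> j = (if j < n then f j else e (j - n))" for j
  have inj\<pi>: "inj \<pi>"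
  proof (rule injI)
    fix x y assume eq: "\<pi> x = \<pi> y"
    show "x = y"
    proof (cases "x < n"; cases "y < n")
      assume "x < n" "y < n" thus ?thesis using eq inj by (auto simp: \<pi>_def inj_on_def)
    next
      assume "x < n" "\<not> y < n"
      hence "\<pi> x \<in> F" "\<pi> y \<in> R" using be by (auto simp: \<pi>_def F_def bij_betw_def)
      thus ?thesis using eq by (simp add: R_def)
    next
      assume "\<not> x < n" "y < n"
      hence "\<pi> y \<in> F" "\<pi> x \<in> R" using be by (auto simp: \<pi>_def F_def bij_betw_def)
      thus ?thesis using eq by (simp add: R_def)
    next
      assume "\<not> x < n" "\<not> y < n"
      moreover have "x - n = y - n" using eq be \<open>\<not> x < n\<close> \<open>\<not> y < n\<close>
        by (auto simp: \<pi>_def bij_betw_def inj_on_def)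
      ultimately show ?thesis by simp
    qed
  qed
  have "surj \<pi>"
  proof -
    { fix y
      have "y \<in> range \<pi>"
      proof (cases "y \<in> F")
        case True then obtain j where "j < n" "y = f j" by (auto simp: F_def)
        thus ?thesis by (metis \<pi>_def rangeI)
      next
        case False hence "y \<in> R" by (simp add: R_def)
        then obtain m where "y = e m" using be by (auto simp: bij_betw_def)
        hence "y = \<pi> (m + n)" by (simp add: \<pi>_def)
        thus ?thesis by simp
      qed }
    thus ?thesis by auto
  qed
  thus ?thesis using inj\<pi> by (auto simp: bij_def \<pi>_def)
qed

lemma abel_id:
  fixes u w :: "nat \<Rightarrow> real"
  shows "(\<Sum>m<k. u m * w m) = (\<Sum>l<k. u l) * w k + (\<Sum>m<k. (\<Sum>l<Suc m. u l) * (w m - w (Suc m)))"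
  by (induction k) (auto simp: algebra_simps)

lemma abel_cmp:
  fixes u v w :: "nat \<Rightarrow> real"
  assumes "decseq w" "\<And>m. 0 \<le> w m" "\<And>m. m \<le> k \<Longrightarrow> (\<Sum>l<m. u l) \<le> (\<Sum>l<m. v l)"
  shows "(\<Sum>m<k. u m * w m) \<le> (\<Sum>m<k. v m * w m)"
proof -
  have a: "(\<Sum>l<k. u l) * w k \<le> (\<Sum>l<k. v l) * w k"
    using assms by (simp add: mult_right_mono)
  have b: "(\<Sum>m<k. (\<Sum>l<Suc m. u l) * (w m - w (Suc m))) \<le> (\<Sum>m<k. (\<Sum>l<Suc m. v l) * (w m - w (Suc m)))"
  proof (rule sum_mono)
    fix m assume "m \<in> {..<k}"
    moreover have "w (Suc m) \<le> w m" using assms(1) by (simp add: decseq_Suc_iff)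
    ultimately show "(\<Sum>l<Suc m. u l) * (w m - w (Suc m)) \<le> (\<Sum>l<Suc m. v l) * (w m - w (Suc m))"
      using assms(3)[of "Suc m"] by (intro mult_right_mono) auto
  qed
  show ?thesis unfolding abel_id[of u w k] abel_id[of v w k] using a b by linarith
qed


definition fin_sup :: "(nat \<Rightarrow> real) \<Rightarrow> bool" where
  "fin_sup a \<longleftrightarrow> (\<forall>c>0. finite {k. c \<le> \<bar>a k\<bar>})"

lemma exists_max:
  assumes "fin_sup a" "finite F"
  shows "\<exists>j. j \<notin> F \<and> (\<forall>k. k \<notin> F \<longrightarrow> \<bar>a k\<bar> \<le> \<bar>a j\<bar>)"
proof (cases "\<forall>k. k \<notin> F \<longrightarrow> a k = 0")
  case True
  obtain j where "j \<notin> F" using ex_new_if_finite[OF infinite_UNIV_nat assms(2)] by blast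
  thus ?thesis using True by auto
next
  case False
  then obtain k0 where k0: "k0 \<notin> F" "a k0 \<noteq> 0" by auto
  define c where "c = \<bar>a k0\<bar>"
  have c: "c > 0" using k0 by (simp add: c_def)
  define S where "S = {k. c \<le> \<bar>a k\<bar>} - F"
  have fS: "finite S" using assms(1) c by (simp add: fin_sup_def S_def)
  have k0S: "k0 \<in> S" using k0 by (simp add: S_def c_def)
  define m where "m = Max ((\<lambda>k. \<bar>a k\<bar>) ` S)"
  have "m \<in> (\<lambda>k. \<bar>a k\<bar>) ` S" unfolding m_def using fS k0S by (intro Max_in) auto
  then obtain j where j: "j \<in> S" "\<bar>a j\<bar> = m" by auto
  have "\<forall>k. k \<notin> F \<longrightarrow> \<bar>a k\<bar> \<le> \<bar>a j\<bar>"
  proof (intro allI impI)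
    fix k assume "k \<notin> F"
    show "\<bar>a k\<bar> \<le> \<bar>a j\<bar>"
    proof (cases "k \<in> S")
      case True thus ?thesis using j fS by (simp add: m_def)
    next
      case False thus ?thesis using j \<open>k \<notin> F\<close> by (auto simp: S_def)
    qed
  qed
  thus ?thesis using j by (auto simp: S_def)
qed

lemma sl_len: "length (sigma_list a n) = n"
  by (induction n) auto

lemma sl_last: "sigma_list a (Suc n) ! n = (LEAST j. j \<notin> set (sigma_list a n) \<and>
        (\<forall>k. k \<notin> set (sigma_list a n) \<longrightarrow> \<bar>a k\<bar> \<le> \<bar>a j\<bar>))"
  by (simp add: nth_append sl_len)

lemma sl_nth: "l < n \<Longrightarrow> sigma_list a n ! l = sigma_seq a l"
proof (induction n)
  case 0 thus ?case by simp
next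
  case (Suc n)
  show ?case
  proof (cases "l < n")
    case True thus ?thesis using Suc by (simp add: nth_append sl_len)
  next
    case False hence "l = n" using Suc by simp
    thus ?thesis by (simp only: sigma_seq_def)
  qed
qed

lemma sl_set: "set (sigma_list a n) = sigma_seq a ` {..<n}"
proof
  show "set (sigma_list a n) \<subseteq> sigma_seq a ` {..<n}"
    unfolding set_conv_nth sl_len by (auto simp: sl_nth)
  show "sigma_seq a ` {..<n} \<subseteq> set (sigma_list a n)"
  proof
    fix y assume "y \<in> sigma_seq a ` {..<n}"
    then obtain i where "i < n" "y = sigma_seq a i" by auto
    hence "y = sigma_list a n ! i" by (simp add: sl_nth)
    thus "y \<in> set (sigma_list a n)" using \<open>i < n\<close> by (simp add: sl_len)
  qed
qed

lemma sigma_prop: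
  assumes "fin_sup a"
  shows "sigma_seq a n \<notin> sigma_seq a ` {..<n} \<and>
    (\<forall>k. k \<notin> sigma_seq a ` {..<n} \<longrightarrow> \<bar>a k\<bar> \<le> \<bar>a (sigma_seq a n)\<bar>)"
proof -
  have ex: "\<exists>j. j \<notin> set (sigma_list a n) \<and> (\<forall>k. k \<notin> set (sigma_list a n) \<longrightarrow> \<bar>a k\<bar> \<le> \<bar>a j\<bar>)"
    using exists_max[OF assms] by simp
  have "sigma_seq a n = (LEAST j. j \<notin> set (sigma_list a n) \<and>
        (\<forall>k. k \<notin> set (sigma_list a n) \<longrightarrow> \<bar>a k\<bar> \<le> \<bar>a j\<bar>))"
    unfolding sigma_seq_def by (rule sl_last)
  with LeastI_ex[OF ex] show ?thesis by (simp add: sl_set)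
qed

lemma sigma_inj:
  assumes "fin_sup a"
  shows "inj (sigma_seq a)"
proof (rule injI)
  fix x y assume eq: "sigma_seq a x = sigma_seq a y"
  show "x = y"
  proof (rule ccontr)
    assume "x \<noteq> y"
    then consider "x < y" | "y < x" by linarith
    thus False
    proof cases
      case 1 thus False using sigma_prop[OF assms, of y] eq by (metis imageI lessThan_iff)
    next
      case 2 thus False using sigma_prop[OF assms, of x] eq by (metis imageI lessThan_iff)
    qed
  qed
qed

lemma sigma_mono:
  assumes "fin_sup a" "l \<le> m"
  shows "\<bar>a (sigma_seq a m)\<bar> \<le> \<bar>a (sigma_seq a l)\<bar>"
proof -
  have "sigma_seq a m \<notin> sigma_seq a ` {..<l}"
  proof
    assume "sigma_seq a m \<in> sigma_seq a ` {..<l}"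
    then obtain x where x: "x < l" "sigma_seq a m = sigma_seq a x" by auto
    hence "m = x" using sigma_inj[OF assms(1)] by (simp add: inj_def)
    thus False using x assms(2) by simp
  qed
  thus ?thesis using sigma_prop[OF assms(1), of l] by blast
qed

lemma top_sum:
  assumes fs: "fin_sup a" and p: "0 < p" and fJ: "finite J" and cJ: "card J \<le> r"
  shows "(\<Sum>x\<in>J. \<bar>a x\<bar> powr p) \<le> (\<Sum>l<r. \<bar>a (sigma_seq a l)\<bar> powr p)"
proof (cases "r = 0")
  case True thus ?thesis using cJ fJ by simp
next
  case False
  define f where "f x = \<bar>a x\<bar> powr p" for x
  define G where "G = sigma_seq a ` {..<r}"
  have inj: "inj (sigma_seq a)" using sigma_inj[OF fs] .
  have fG: "finite G" by (simp add: G_def)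
  have cG: "card G = r" unfolding G_def using inj by (simp add: card_image inj_on_subset)
  have sG: "(\<Sum>l<r. f (sigma_seq a l)) = sum f G"
    unfolding G_def using inj by (simp add: sum.reindex inj_on_subset)
  define c where "c = f (sigma_seq a (r - 1))"
  have c0: "0 \<le> c" by (simp add: c_def f_def)
  have out: "f x \<le> c" if "x \<notin> G" for x
  proof -
    have "x \<notin> sigma_seq a ` {..<r-1}" using that by (auto simp: G_def)
    hence "\<bar>a x\<bar> \<le> \<bar>a (sigma_seq a (r-1))\<bar>" using sigma_prop[OF fs, of "r-1"] by blast
    thus ?thesis unfolding c_def f_def using p by (simp add: powr_mono2)
  qed
  have inn: "c \<le> f y" if yG: "y \<in> G" for y
  proof -
    obtain l where l: "l < r" "y = sigma_seq a l" using yG by (auto simp: G_def)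
    hence "\<bar>a (sigma_seq a (r-1))\<bar> \<le> \<bar>a y\<bar>" using sigma_mono[OF fs, of l "r-1"] by simp
    thus ?thesis unfolding c_def f_def using p by (simp add: powr_mono2)
  qed
  have e1: "sum f J = sum f (J \<inter> G) + sum f (J - G)"
    using sum.Int_Diff[OF fJ, of f G] .
  have e2: "sum f G = sum f (J \<inter> G) + sum f (G - J)"
    using sum.Int_Diff[OF fG, of f J] by (simp add: Int_commute)
  have cards: "card (J - G) \<le> card (G - J)"
  proof -
    have "card (J - G) + card (J \<inter> G) = card J" using card_Int_Diff[OF fJ, of G] by simp
    moreover have "card (G - J) + card (G \<inter> J) = card G" using card_Int_Diff[OF fG, of J] by simp
    ultimately show ?thesis using cJ cG by (simp add: Int_commute)
  qed
  have "sum f (J - G) \<le> of_nat (card (J - G)) * c"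
    by (rule sum_bounded_above) (use out in auto)
  also have "\<dots> \<le> of_nat (card (G - J)) * c" using cards c0 by (simp add: mult_right_mono)
  also have "\<dots> \<le> sum f (G - J)" by (rule sum_bounded_below) (use inn in auto)
  finally have "sum f (J - G) \<le> sum f (G - J)" .
  hence "sum f J \<le> sum f G" using e1 e2 by linarith
  thus ?thesis using sG by (simp add: f_def)
qed


definition Ssup :: "real \<Rightarrow> (nat \<Rightarrow> real) \<Rightarrow> (nat \<Rightarrow> real) \<Rightarrow> real" where
  "Ssup p w a = (SUP \<sigma>\<in>{\<sigma>. bij \<sigma>}. perm_sum p w a \<sigma>)"

lemma Ssup_upper:
  assumes "a \<in> Lpw p w" "bij \<pi>"
  shows "perm_sum p w a \<pi> \<le> Ssup p w a"
proof -
  obtain B where B: "\<forall>\<sigma>. bij \<sigma> \<longrightarrow> perm_sum p w a \<sigma> \<le> B" using assms(1) by (auto simp: Lpw_def)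
  have "bdd_above ((perm_sum p w a) ` {\<sigma>. bij \<sigma>})" using B by (auto intro!: bdd_aboveI2)
  thus ?thesis unfolding Ssup_def using assms(2) by (intro cSUP_upper) auto
qed

lemma partial_le:
  assumes a: "a \<in> Lpw p w" and w: "\<And>i. 0 \<le> w i" and f: "inj_on f {..<n}"
  shows "(\<Sum>j<n. \<bar>a (f j)\<bar> powr p * w j) \<le> Ssup p w a"
proof -
  obtain \<pi> where \<pi>: "bij \<pi>" "\<forall>j<n. \<pi> j = f j" using extend_bij[OF f] by blast
  have sm: "summable (\<lambda>i. \<bar>a (\<pi> i)\<bar> powr p * w i)" using a \<pi>(1) by (auto simp: Lpw_def)
  have "(\<Sum>j<n. \<bar>a (f j)\<bar> powr p * w j) = (\<Sum>j<n. \<bar>a (\<pi> j)\<bar> powr p * w j)"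
    using \<pi>(2) by simp
  also have "\<dots> \<le> perm_sum p w a \<pi>" unfolding perm_sum_def
    by (rule sum_le_suminf[OF sm]) (auto intro: mult_nonneg_nonneg w)
  also have "\<dots> \<le> Ssup p w a" by (rule Ssup_upper[OF a \<pi>(1)])
  finally show ?thesis .
qed

lemma lpw_fin_sup:
  assumes w: "weight_seq w" and p: "0 < p" and a: "a \<in> Lpw p w"
  shows "fin_sup a"
  unfolding fin_sup_def
proof (intro allI impI, rule ccontr)
  fix c :: real assume c: "0 < c" and inf: "infinite {k. c \<le> \<bar>a k\<bar>}"
  define E where "E = {k. c \<le> \<bar>a k\<bar>}"
  have infE: "infinite E" using inf by (simp add: E_def)
  have w0: "\<And>i. 0 \<le> w i" using w by (auto simp: weight_seq_def less_imp_le)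
  have cp: "0 < c powr p" using c by simp
  have inj: "inj (enumerate E)" using strict_mono_enumerate[OF infE] by (rule strict_mono_imp_inj_on)
  have "(\<Sum>i<n. w i) \<le> Ssup p w a / c powr p" for n
  proof -
    have "c powr p * (\<Sum>i<n. w i) = (\<Sum>i<n. c powr p * w i)" by (simp add: sum_distrib_left)
    also have "\<dots> \<le> (\<Sum>i<n. \<bar>a (enumerate E i)\<bar> powr p * w i)"
    proof (rule sum_mono)
      fix i assume "i \<in> {..<n}"
      have "enumerate E i \<in> E" by (rule enumerate_in_set[OF infE])
      hence "c \<le> \<bar>a (enumerate E i)\<bar>" by (simp add: E_def)
      hence "c powr p \<le> \<bar>a (enumerate E i)\<bar> powr p" using c p by (simp add: powr_mono2)
      thus "c powr p * w i \<le> \<bar>a (enumerate E i)\<bar> powr p * w i" using w0 by (simp add: mult_right_mono)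
    qed
    also have "\<dots> \<le> Ssup p w a" by (rule partial_le[OF a w0]) (meson inj inj_on_subset subset_UNIV)
    finally show ?thesis using cp by (simp add: field_simps)
  qed
  hence "summable w" using w0 by (intro summableI_nonneg_bounded) auto
  thus False using w by (simp add: weight_seq_def)
qed


lemma w_facts:
  assumes "weight_seq w"
  shows "\<And>i. 0 \<le> w i" "decseq w"
  using assms by (auto simp: weight_seq_def less_imp_le)

lemma T_props:
  assumes w: "weight_seq w" and p: "0 < p" and a: "a \<in> Lpw p w"
  shows "summable (\<lambda>j. \<bar>a (sigma_seq a j)\<bar> powr p * w j)"
    "(\<Sum>j. \<bar>a (sigma_seq a j)\<bar> powr p * w j) \<le> Ssup p w a"
proof -
  have fs: "fin_sup a" by (rule lpw_fin_sup[OF w p a])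
  have inj: "inj_on (sigma_seq a) {..<n}" for n using sigma_inj[OF fs] by (meson inj_on_subset subset_UNIV)
  have b: "(\<Sum>j<n. \<bar>a (sigma_seq a j)\<bar> powr p * w j) \<le> Ssup p w a" for n
    by (rule partial_le[OF a w_facts(1)[OF w] inj])
  show sm: "summable (\<lambda>j. \<bar>a (sigma_seq a j)\<bar> powr p * w j)"
    by (rule summableI_nonneg_bounded[OF _ b]) (simp add: w_facts(1)[OF w])
  show "(\<Sum>j. \<bar>a (sigma_seq a j)\<bar> powr p * w j) \<le> Ssup p w a"
    by (rule suminf_le_const[OF sm b])
qed

lemma trunc_bound:
  assumes w: "weight_seq w" and p: "0 < p" and fs: "fin_sup a" and \<pi>: "bij \<pi>"
  shows "0 \<le> perm_sum p w (trunc_seq k a) \<pi> \<and>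
    perm_sum p w (trunc_seq k a) \<pi> \<le> (\<Sum>m<k. \<bar>a (sigma_seq a m)\<bar> powr p * w m)"
proof -
  have w0: "\<And>i. 0 \<le> w i" and wd: "decseq w" using w_facts[OF w] by auto
  have injp: "inj \<pi>" using \<pi> by (simp add: bij_def)
  define I where "I = \<pi> -` {..<k}"
  have fI: "finite I" unfolding I_def using injp by (intro finite_vimageI) auto
  obtain R0 where R0: "\<forall>i\<in>I. i < R0" using finite_nat_bounded[OF fI] by (auto simp: lessThan_def)
  define R where "R = max R0 k"
  have kR: "k \<le> R" by (simp add: R_def)
  define u where "u i = \<bar>trunc_seq k a (\<pi> i)\<bar> powr p" for i
  define v where "v m = (if m < k then \<bar>a (sigma_seq a m)\<bar> powr p else 0)" for m
  have ps: "perm_sum p w (trunc_seq k a) \<pi> = (\<Sum>i<R. u i * w i)"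
    unfolding perm_sum_def u_def
  proof (rule suminf_finite)
    fix i assume "i \<notin> {..<R}"
    hence "i \<notin> I" using R0 by (auto simp: R_def)
    hence "\<not> \<pi> i < k" by (simp add: I_def)
    thus "\<bar>trunc_seq k a (\<pi> i)\<bar> powr p * w i = 0" by (simp add: trunc_seq_def)
  qed simp
  have vs: "(\<Sum>m<R. v m * w m) = (\<Sum>m<k. \<bar>a (sigma_seq a m)\<bar> powr p * w m)"
  proof -
    have "(\<Sum>m<R. v m * w m) = (\<Sum>m<k. v m * w m)"
      using kR by (intro sum.mono_neutral_right) (auto simp: v_def)
    thus ?thesis by (simp add: v_def)
  qed
  have cmp: "(\<Sum>l<m. u l) \<le> (\<Sum>l<m. v l)" for m
  proof -
    have "(\<Sum>l<m. u l) = (\<Sum>x\<in>\<pi> ` {..<m}. \<bar>trunc_seq k a x\<bar> powr p)"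
      unfolding u_def using injp by (simp add: sum.reindex inj_on_subset)
    also have "\<dots> = (\<Sum>x\<in>\<pi> ` {..<m}. if x \<in> {..<k} then \<bar>a x\<bar> powr p else 0)"
      by (intro sum.cong) (auto simp: trunc_seq_def)
    also have "\<dots> = (\<Sum>x\<in>\<pi> ` {..<m} \<inter> {..<k}. \<bar>a x\<bar> powr p)"
      by (simp add: sum.inter_restrict)
    also have "\<dots> \<le> (\<Sum>l<min m k. \<bar>a (sigma_seq a l)\<bar> powr p)"
    proof (rule top_sum[OF fs p])
      show "finite (\<pi> ` {..<m} \<inter> {..<k})" by simp
      have "card (\<pi> ` {..<m} \<inter> {..<k}) \<le> card (\<pi> ` {..<m})" by (intro card_mono) auto
      also have "\<dots> \<le> m" using card_image_le[of "{..<m}" \<pi>] by simp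
      finally have c1: "card (\<pi> ` {..<m} \<inter> {..<k}) \<le> m" .
      have "card (\<pi> ` {..<m} \<inter> {..<k}) \<le> card {..<k}" by (intro card_mono) auto
      hence "card (\<pi> ` {..<m} \<inter> {..<k}) \<le> k" by simp
      thus "card (\<pi> ` {..<m} \<inter> {..<k}) \<le> min m k" using c1 by simp
    qed
    also have "\<dots> = (\<Sum>l<m. v l)"
    proof -
      have "(\<Sum>l<m. v l) = (\<Sum>l<min m k. v l)"
        by (intro sum.mono_neutral_right) (auto simp: v_def)
      thus ?thesis by (simp add: v_def)
    qed
    finally show ?thesis .
  qed
  have "(\<Sum>i<R. u i * w i) \<le> (\<Sum>m<R. v m * w m)"
    by (rule abel_cmp[OF wd w0 cmp])
  moreover have "0 \<le> (\<Sum>i<R. u i * w i)" using w0 by (intro sum_nonneg) (simp add: u_def)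
  ultimately show ?thesis using ps vs by simp
qed

lemma Ssup_trunc:
  assumes w: "weight_seq w" and p: "0 < p" and fs: "fin_sup a"
  shows "0 \<le> Ssup p w (trunc_seq k a) \<and> Ssup p w (trunc_seq k a) \<le> (\<Sum>m<k. \<bar>a (sigma_seq a m)\<bar> powr p * w m)"
proof -
  have bd: "bdd_above ((perm_sum p w (trunc_seq k a)) ` {\<sigma>. bij \<sigma>})"
    using trunc_bound[OF w p fs] by (auto intro!: bdd_aboveI2)
  have "0 \<le> perm_sum p w (trunc_seq k a) id" using trunc_bound[OF w p fs, of id] by simp
  also have "\<dots> \<le> Ssup p w (trunc_seq k a)" unfolding Ssup_def using bd by (intro cSUP_upper) (auto simp: bij_def)
  finally have "0 \<le> Ssup p w (trunc_seq k a)" .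
  moreover have "Ssup p w (trunc_seq k a) \<le> (\<Sum>m<k. \<bar>a (sigma_seq a m)\<bar> powr p * w m)"
    unfolding Ssup_def using trunc_bound[OF w p fs]
    by (intro cSUP_least) (auto intro: bij_id)
  ultimately show ?thesis by simp
qed


theorem mainTheorem12:
  fixes p :: real and w :: "nat \<Rightarrow> real" and A :: "(nat \<Rightarrow> real) set"
  assumes "1 \<le> p"
    and "weight_seq w"
    and "A \<subseteq> Lpw p w"
    and "\<exists>M. \<forall>a\<in>A. pw_norm p w a \<le> M"
    and "equinormed p w A"
  shows "\<forall>\<epsilon>>0. \<exists>N. \<forall>a\<in>A. \<forall>i\<ge>N.
           summable (\<lambda>j. \<bar>a (sigma_seq a (j + i))\<bar> powr p * w (j + i)) \<and>
           (\<Sum>j. \<bar>a (sigma_seq a (j + i))\<bar> powr p * w (j + i)) < \<epsilon>"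
proof (intro allI impI)
  fix \<epsilon> :: real assume e: "0 < \<epsilon>"
  have p: "0 < p" using assms(1) by simp
  have w: "weight_seq w" by fact
  obtain M0 where M0: "\<forall>a\<in>A. pw_norm p w a \<le> M0" using assms(4) by blast
  define M where "M = max M0 0"
  have M: "\<forall>a\<in>A. pw_norm p w a \<le> M" using M0 by (auto simp: M_def)
  have "continuous_on {0..M} (\<lambda>t::real. t powr p)"
    by (rule continuous_on_powr') (auto intro: continuous_intros simp: p)
  hence "uniformly_continuous_on {0..M} (\<lambda>t::real. t powr p)"
    by (intro compact_uniformly_continuous) auto
  then obtain \<delta> where d: "\<delta> > 0"
    and dP: "\<forall>x\<in>{0..M}. \<forall>x'\<in>{0..M}. dist x' x < \<delta> \<longrightarrow> dist (x' powr p) (x powr p) < \<epsilon>"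
    using e unfolding uniformly_continuous_on_def by metis
  obtain k where k: "\<forall>a\<in>A. pw_norm p w a \<le> pw_norm_i p w k a + \<delta>/2"
    using assms(5) d unfolding equinormed_def by (meson half_gt_zero)
  show "\<exists>N. \<forall>a\<in>A. \<forall>i\<ge>N.
           summable (\<lambda>j. \<bar>a (sigma_seq a (j + i))\<bar> powr p * w (j + i)) \<and>
           (\<Sum>j. \<bar>a (sigma_seq a (j + i))\<bar> powr p * w (j + i)) < \<epsilon>"
  proof (intro exI[of _ k] ballI allI impI)
    fix a i assume aA: "a \<in> A" and ik: "k \<le> i"
    have a: "a \<in> Lpw p w" using aA assms(3) by auto
    have fs: "fin_sup a" by (rule lpw_fin_sup[OF w p a])
    define g where "g j = \<bar>a (sigma_seq a j)\<bar> powr p * w j" for j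
    have g0: "0 \<le> g j" for j using w_facts(1)[OF w] by (simp add: g_def)
    have sm: "summable g" unfolding g_def by (rule T_props(1)[OF w p a])
    have Tx: "suminf g \<le> Ssup p w a" unfolding g_def by (rule T_props(2)[OF w p a])
    have yT: "0 \<le> Ssup p w (trunc_seq k a)" "Ssup p w (trunc_seq k a) \<le> (\<Sum>j<k. g j)"
      using Ssup_trunc[OF w p fs, of k] by (auto simp: g_def)
    have Tki: "(\<Sum>j<k. g j) \<le> (\<Sum>j<i. g j)" using ik g0 by (intro sum_mono2) auto
    have Ti: "(\<Sum>j<i. g j) \<le> suminf g" using sm g0 by (intro sum_le_suminf) auto
    define x where "x = Ssup p w a"
    define y where "y = Ssup p w (trunc_seq k a)"
    have y0: "0 \<le> y" and yx: "y \<le> x" using yT Tki Ti Tx by (auto simp: x_def y_def)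
    define s where "s = x powr (1/p)"
    define t where "t = y powr (1/p)"
    have sM: "s \<le> M" using M aA by (simp add: s_def x_def pw_norm_def Ssup_def)
    have st: "s \<le> t + \<delta>/2" using k aA
      by (simp add: s_def t_def x_def y_def pw_norm_def pw_norm_i_def Ssup_def)
    have t0: "0 \<le> t" by (simp add: t_def)
    have ts: "t \<le> s" unfolding s_def t_def using y0 yx p by (intro powr_mono2) auto
    have sx: "s powr p = x" using y0 yx p by (simp add: s_def powr_powr)
    have ty: "t powr p = y" using y0 p by (simp add: t_def powr_powr)
    have "dist s t < \<delta>" using st ts d by (simp add: dist_real_def)
    hence "dist (s powr p) (t powr p) < \<epsilon>" using dP t0 ts sM by auto
    hence xy: "x - y < \<epsilon>" using sx ty by (simp add: dist_real_def)
    have "(\<Sum>j. g (j + i)) = suminf g - (\<Sum>j<i. g j)" by (rule suminf_minus_initial_segment[OF sm])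
    also have "\<dots> < \<epsilon>" using xy Tki Tx yT by (simp add: x_def y_def)
    finally show "summable (\<lambda>j. \<bar>a (sigma_seq a (j + i))\<bar> powr p * w (j + i)) \<and>
           (\<Sum>j. \<bar>a (sigma_seq a (j + i))\<bar> powr p * w (j + i)) < \<epsilon>"
      using summable_ignore_initial_segment[OF sm, of i] by (simp add: g_def)
  qed
qed

end
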